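(* Let $n\ge5$ and let $\mathcal{W}=\mathcal{W}_1\cup\mathcal{W}_2\subset(\mathbb{R}^{4n})^{\otimes5}$ be the set defined below. Then the tensors in $\mathcal{W}$ are linearly independent. Moreover, if $\mathcal{T}_1\in\operatorname{Span}\mathcal{W}_1$ and $\mathcal{T}_2\in\operatorname{Span}\mathcal{W}_2$ satisfy $\mathcal{T}_1+\mathcal{T}_2=0$, then $\mathcal{T}_1=\mathcal{T}_2=0$.
   Context: All tensors are real. The set $\mathcal{W}$: for $i\in\{1,\dots,n\}$ let $\alpha_i\in\mathbb{R}^{2n}$ have entries $1$ at positions $2i-1,2i$ and $0$ elsewhere; $(a|b)\in\mathbb{R}^{4n}$ is concatenation. With $1\le i_1<i_2<i_3<i_4\le n$ and $1\le k_1<k_2\le n$ ranging over all choices, let $U$ be the set of vectors of the 16 types: $(\alpha_{i_1}+\alpha_{i_2}+\alpha_{i_3}+\alpha_{i_4}|0)$, $(\alpha_{i_1}+\alpha_{i_2}+\alpha_{i_3}|0)$, $(\alpha_{i_1}+\alpha_{i_2}|0)$, $(\alpha_{i_1}|0)$, $(\alpha_{i_1}+\alpha_{i_2}+\alpha_{i_3}+\alpha_{i_4}|\alpha_{k_1})$, $(\alpha_{i_1}+\alpha_{i_2}|\tfrac{(n-2)^2}{(n-3)(n-1)}\alpha_{k_1})$, $(\alpha_{i_1}|\tfrac{n-2}{n-3}\alpha_{k_1})$, $(\alpha_{i_1}|\tfrac{n-1}{n-4}\alpha_{k_1})$, $(\alpha_{i_1}+\alpha_{i_2}+\alpha_{i_3}|\alpha_{k_1}+\alpha_{k_2})$,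 $(\alpha_{i_1}+\alpha_{i_2}|\tfrac{n-2}{n-3}(\alpha_{k_1}+\alpha_{k_2}))$, $(\alpha_{i_1}+\alpha_{i_2}|\tfrac{n-2}{n-4}\alpha_{k_1})$, $(0|\alpha_{k_1})$, $(\alpha_{i_1}+\alpha_{i_2}+\alpha_{i_3}|\tfrac{n-3}{n-4}\alpha_{k_1})$, $(\alpha_{i_1}+\alpha_{i_2}+\alpha_{i_3}|\tfrac{n-2}{n-1}\alpha_{k_1})$, $(\alpha_{i_1}|\tfrac{n-1}{n-3}(\alpha_{k_1}+\alpha_{k_2}))$, $(0|\alpha_{k_1}+\alpha_{k_2})$ (types with only $i_1$ or only $k_1$ omit the other indices; $k_1$ alone ranges over $\{1,\dots,n\}$). Let $\pi(a_1,\dots,a_{2n},b_1,\dots,b_{2n})=(b_2,\dots,b_{2n},b_1,a_2,\dots,a_{2n},a_1)$. Set $\mathcal{W}_1=\{u^{\otimes5}:u\in U\}$, $\mathcal{W}_2=\{(\pi u)^{\otimes5}:u\in U\}$, $\mathcal{W}=\mathcal{W}_1\cup\mathcal{W}_2$; linear independence means the tensors $u^{\otimes5}$, $(\pi u)^{\otimes 5}$, $u\in U$, are linearly independent in $(\mathbb{R}^{4n})^{\otimes5}$. *)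

theory Defs
  imports Main "HOL.Real"
begin

text \<open>Vectors of R^m are modelled as functions nat => real with 1-based indices
  1..m (value 0 outside). Tensors in (R^(4n))^(tensor 5) are functions on 5-tuples of indices.\<close>

definition alpha :: "nat \<Rightarrow> nat \<Rightarrow> real" where
  "alpha i = (\<lambda>j. if j = 2*i - 1 \<or> j = 2*i then 1 else 0)"

definition asum :: "nat set \<Rightarrow> nat \<Rightarrow> real" where
  "asum S = (\<lambda>j. \<Sum>i\<in>S. alpha i j)"

definition scl :: "real \<Rightarrow> (nat \<Rightarrow> real) \<Rightarrow> nat \<Rightarrow> real" where
  "scl c v = (\<lambda>j. c * v j)"

definition zvec :: "nat \<Rightarrow> real" where
  "zvec = (\<lambda>j. 0)"

definition cat :: "nat \<Rightarrow> (nat \<Rightarrow> real) \<Rightarrow> (nat \<Rightarrow> real) \<Rightarrow> nat \<Rightarrow> real" where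
  "cat n a b = (\<lambda>j. if 1 \<le> j \<and> j \<le> 2*n then a j
                    else if 2*n < j \<and> j \<le> 4*n then b (j - 2*n) else 0)"

definition Uset :: "nat \<Rightarrow> (nat \<Rightarrow> real) set" where
  "Uset n = (let r = real n in
     {cat n (asum {i1,i2,i3,i4}) zvec | i1 i2 i3 i4. 1 \<le> i1 \<and> i1 < i2 \<and> i2 < i3 \<and> i3 < i4 \<and> i4 \<le> n}
   \<union> {cat n (asum {i1,i2,i3}) zvec | i1 i2 i3. 1 \<le> i1 \<and> i1 < i2 \<and> i2 < i3 \<and> i3 \<le> n}
   \<union> {cat n (asum {i1,i2}) zvec | i1 i2. 1 \<le> i1 \<and> i1 < i2 \<and> i2 \<le> n}
   \<union> {cat n (alpha i1) zvec | i1. 1 \<le> i1 \<and> i1 \<le> n}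
   \<union> {cat n (asum {i1,i2,i3,i4}) (alpha k1) | i1 i2 i3 i4 k1.
        1 \<le> i1 \<and> i1 < i2 \<and> i2 < i3 \<and> i3 < i4 \<and> i4 \<le> n \<and> 1 \<le> k1 \<and> k1 \<le> n}
   \<union> {cat n (asum {i1,i2}) (scl ((r-2)^2 / ((r-3)*(r-1))) (alpha k1)) | i1 i2 k1.
        1 \<le> i1 \<and> i1 < i2 \<and> i2 \<le> n \<and> 1 \<le> k1 \<and> k1 \<le> n}
   \<union> {cat n (alpha i1) (scl ((r-2)/(r-3)) (alpha k1)) | i1 k1.
        1 \<le> i1 \<and> i1 \<le> n \<and> 1 \<le> k1 \<and> k1 \<le> n}
   \<union> {cat n (alpha i1) (scl ((r-1)/(r-4)) (alpha k1)) | i1 k1.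
        1 \<le> i1 \<and> i1 \<le> n \<and> 1 \<le> k1 \<and> k1 \<le> n}
   \<union> {cat n (asum {i1,i2,i3}) (asum {k1,k2}) | i1 i2 i3 k1 k2.
        1 \<le> i1 \<and> i1 < i2 \<and> i2 < i3 \<and> i3 \<le> n \<and> 1 \<le> k1 \<and> k1 < k2 \<and> k2 \<le> n}
   \<union> {cat n (asum {i1,i2}) (scl ((r-2)/(r-3)) (asum {k1,k2})) | i1 i2 k1 k2.
        1 \<le> i1 \<and> i1 < i2 \<and> i2 \<le> n \<and> 1 \<le> k1 \<and> k1 < k2 \<and> k2 \<le> n}
   \<union> {cat n (asum {i1,i2}) (scl ((r-2)/(r-4)) (alpha k1)) | i1 i2 k1.
        1 \<le> i1 \<and> i1 < i2 \<and> i2 \<le> n \<and> 1 \<le> k1 \<and> k1 \<le> n}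
   \<union> {cat n zvec (alpha k1) | k1. 1 \<le> k1 \<and> k1 \<le> n}
   \<union> {cat n (asum {i1,i2,i3}) (scl ((r-3)/(r-4)) (alpha k1)) | i1 i2 i3 k1.
        1 \<le> i1 \<and> i1 < i2 \<and> i2 < i3 \<and> i3 \<le> n \<and> 1 \<le> k1 \<and> k1 \<le> n}
   \<union> {cat n (asum {i1,i2,i3}) (scl ((r-2)/(r-1)) (alpha k1)) | i1 i2 i3 k1.
        1 \<le> i1 \<and> i1 < i2 \<and> i2 < i3 \<and> i3 \<le> n \<and> 1 \<le> k1 \<and> k1 \<le> n}
   \<union> {cat n (alpha i1) (scl ((r-1)/(r-3)) (asum {k1,k2})) | i1 k1 k2.
        1 \<le> i1 \<and> i1 \<le> n \<and> 1 \<le> k1 \<and> k1 < k2 \<and> k2 \<le> n}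
   \<union> {cat n zvec (asum {k1,k2}) | k1 k2. 1 \<le> k1 \<and> k1 < k2 \<and> k2 \<le> n})"

text \<open>Index map of pi: pi(a_1..a_2n, b_1..b_2n) = (b_2,...,b_2n,b_1,a_2,...,a_2n,a_1).\<close>
definition pidx :: "nat \<Rightarrow> nat \<Rightarrow> nat" where
  "pidx n j = (if j < 2*n then 2*n + j + 1
               else if j = 2*n then 2*n + 1
               else if j < 4*n then j - 2*n + 1
               else 1)"

definition piv :: "nat \<Rightarrow> (nat \<Rightarrow> real) \<Rightarrow> nat \<Rightarrow> real" where
  "piv n v = (\<lambda>j. if 1 \<le> j \<and> j \<le> 4*n then v (pidx n j) else 0)"

definition tensor5 :: "(nat \<Rightarrow> real) \<Rightarrow> nat \<times> nat \<times> nat \<times> nat \<times> nat \<Rightarrow> real" where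
  "tensor5 v = (\<lambda>(a,b,c,d,e). v a * v b * v c * v d * v e)"

end

theory Submission
  imports Defs
begin


definition mk :: "nat \<Rightarrow> nat set \<Rightarrow> nat set \<Rightarrow> real \<Rightarrow> nat \<Rightarrow> real" where
  "mk n A K L = cat n (asum A) (scl L (asum K))"

lemma alpha_pos: "1 \<le> j \<Longrightarrow> alpha i j = (if i = (j+1) div 2 then 1 else 0)"
  unfolding alpha_def by (auto; presburger)

lemma asum_pos: "finite A \<Longrightarrow> 1 \<le> j \<Longrightarrow> asum A j = (if (j+1) div 2 \<in> A then 1 else 0)"
  unfolding asum_def by (simp add: alpha_pos)

lemma mk_val: "finite A \<Longrightarrow> finite K \<Longrightarrow> mk n A K L j =
  (if 1 \<le> j \<and> j \<le> 2*n then (if (j+1) div 2 \<in> A then 1 else 0)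
   else if 2*n < j \<and> j \<le> 4*n then L * (if (j - 2*n + 1) div 2 \<in> K then 1 else 0) else 0)"
proof -
  assume fA: "finite A" and fK: "finite K"
  show ?thesis
  proof (cases "2*n < j \<and> j \<le> 4*n")
    case True
    have "1 \<le> j - 2*n" using True by arith
    then have "asum K (j - 2*n) = (if (j - 2*n + 1) div 2 \<in> K then 1 else 0)" using fK asum_pos by blast
    then show ?thesis using True by (simp add: mk_def cat_def scl_def)
  next
    case False
    then show ?thesis using fA by (auto simp add: mk_def cat_def asum_pos)
  qed
qed

definition lam :: "nat \<Rightarrow> nat \<Rightarrow> nat \<Rightarrow> real set" where
"lam n a k = (let r = real n in
  if k = 0 then (if 1 \<le> a \<and> a \<le> 4 then {1} else {})
  else if a=4 \<and> k=1 then {1}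
  else if a=2 \<and> k=1 then {(r-2)^2/((r-3)*(r-1)), (r-2)/(r-4)}
  else if a=1 \<and> k=1 then {(r-2)/(r-3), (r-1)/(r-4)}
  else if a=3 \<and> k=2 then {1}
  else if a=2 \<and> k=2 then {(r-2)/(r-3)}
  else if a=0 \<and> k=1 then {1}
  else if a=3 \<and> k=1 then {(r-3)/(r-4), (r-2)/(r-1)}
  else if a=1 \<and> k=2 then {(r-1)/(r-3)}
  else if a=0 \<and> k=2 then {1}
  else {})"

definition Idx :: "nat \<Rightarrow> (nat set \<times> nat set \<times> real) set" where
  "Idx n = {(A,K,L). A \<subseteq> {1..n} \<and> K \<subseteq> {1..n} \<and> L \<in> lam n (card A) (card K)}"

definition mkI :: "nat \<Rightarrow> nat set \<times> nat set \<times> real \<Rightarrow> nat \<Rightarrow> real" where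
  "mkI n t = (case t of (A,K,L) \<Rightarrow> mk n A K L)"

lemma lam_props: "n \<ge> 5 \<Longrightarrow> L \<in> lam n a k \<Longrightarrow>
   a + k \<le> 5 \<and> (a \<noteq> 0 \<or> k \<noteq> 0) \<and> (k \<noteq> 0 \<longrightarrow> L \<noteq> 0) \<and> (k = 0 \<longrightarrow> L = 1) \<and> k \<le> 2"
  unfolding lam_def Let_def by (auto split: if_splits)

lemma lam3: "x \<in> lam n a k \<Longrightarrow> y \<in> lam n a k \<Longrightarrow> z \<in> lam n a k \<Longrightarrow> x = y \<or> x = z \<or> y = z"
  unfolding lam_def Let_def by (auto split: if_splits)

lemma lam2: "x \<in> lam n a k \<Longrightarrow> y \<in> lam n a k \<Longrightarrow> x \<noteq> y \<Longrightarrow> a \<noteq> 0 \<and> a + k \<le> 4"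
  unfolding lam_def Let_def by (auto split: if_splits)

lemma alpha_asum: "alpha i = asum {i}"
  by (rule ext) (simp add: asum_def)

lemma zvec_asum: "zvec = asum {}"
  by (rule ext) (simp add: asum_def zvec_def)

lemma cat_mk1: "cat n (asum A) (asum K) = mk n A K 1"
  unfolding mk_def scl_def by simp

lemma cat_mk2: "cat n (asum A) (scl L (asum K)) = mk n A K L"
  unfolding mk_def by simp

lemma mem_img: "A \<subseteq> {1..n} \<Longrightarrow> K \<subseteq> {1..n} \<Longrightarrow> L \<in> lam n (card A) (card K) \<Longrightarrow> mk n A K L \<in> mkI n ` Idx n"
  by (rule image_eqI[where x="(A,K,L)"]) (auto simp: mkI_def Idx_def)

lemma Uset_sub: "Uset n \<subseteq> mkI n ` Idx n"
  unfolding Uset_def Let_def alpha_asum zvec_asum cat_mk1 cat_mk2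
  apply (intro Un_least)
  apply (auto intro!: mem_img simp: lam_def Let_def)
  done

lemma mk_a: "finite A \<Longrightarrow> finite K \<Longrightarrow> 1 \<le> i \<Longrightarrow> i \<le> n \<Longrightarrow> mk n A K L (2*i-1) = (if i\<in>A then 1 else 0)"
proof -
  assume "finite A" "finite K" "1 \<le> i" "i \<le> n"
  moreover have "(2*i-1+1) div 2 = i" "1 \<le> 2*i-1" "2*i-1 \<le> 2*n" using \<open>1 \<le> i\<close> \<open>i \<le> n\<close> by auto
  ultimately show ?thesis by (simp add: mk_val)
qed

lemma mk_a2: "finite A \<Longrightarrow> finite K \<Longrightarrow> 1 \<le> i \<Longrightarrow> i \<le> n \<Longrightarrow> mk n A K L (2*i) = (if i\<in>A then 1 else 0)"
proof -
  assume "finite A" "finite K" "1 \<le> i" "i \<le> n"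
  moreover have "(2*i+1) div 2 = i" "1 \<le> 2*i" "2*i \<le> 2*n" using \<open>1 \<le> i\<close> \<open>i \<le> n\<close> by auto
  ultimately show ?thesis by (simp add: mk_val)
qed

lemma mk_b: "finite A \<Longrightarrow> finite K \<Longrightarrow> 1 \<le> k \<Longrightarrow> k \<le> n \<Longrightarrow> mk n A K L (2*n+2*k-1) = L * (if k\<in>K then 1 else 0)"
proof -
  assume "finite A" "finite K" "1 \<le> k" "k \<le> n"
  moreover have "(2*n+2*k-1 - 2*n + 1) div 2 = k" "2*n < 2*n+2*k-1" "2*n+2*k-1 \<le> 4*n" "\<not> 2*n+2*k-1 \<le> 2*n"
    using \<open>1 \<le> k\<close> \<open>k \<le> n\<close> by auto
  ultimately show ?thesis by (simp add: mk_val)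
qed

lemma mk_b2: "finite A \<Longrightarrow> finite K \<Longrightarrow> 1 \<le> k \<Longrightarrow> k \<le> n \<Longrightarrow> mk n A K L (2*n+2*k) = L * (if k\<in>K then 1 else 0)"
proof -
  assume "finite A" "finite K" "1 \<le> k" "k \<le> n"
  moreover have "(2*n+2*k - 2*n + 1) div 2 = k" "2*n < 2*n+2*k" "2*n+2*k \<le> 4*n" "\<not> 2*n+2*k \<le> 2*n"
    using \<open>1 \<le> k\<close> \<open>k \<le> n\<close> by auto
  ultimately show ?thesis by (simp add: mk_val)
qed

lemma Idx_fin: "(A,K,L) \<in> Idx n \<Longrightarrow> finite A \<and> finite K \<and> A \<subseteq> {1..n} \<and> K \<subseteq> {1..n} \<and> L \<in> lam n (card A) (card K)"
  unfolding Idx_def by (auto intro: finite_subset)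

lemma inj_mkI: assumes n5: "n \<ge> 5" shows "inj_on (mkI n) (Idx n)"
proof (rule inj_onI)
  fix t t' assume t: "t \<in> Idx n" and t': "t' \<in> Idx n" and eq: "mkI n t = mkI n t'"
  obtain A K L where tt: "t = (A,K,L)" by (cases t)
  obtain A' K' L' where tt': "t' = (A',K',L')" by (cases t')
  have I: "finite A" "finite K" "A \<subseteq> {1..n}" "K \<subseteq> {1..n}" "L \<in> lam n (card A) (card K)"
    using Idx_fin t tt by auto
  have I': "finite A'" "finite K'" "A' \<subseteq> {1..n}" "K' \<subseteq> {1..n}" "L' \<in> lam n (card A') (card K')"
    using Idx_fin t' tt' by auto
  have E: "mk n A K L j = mk n A' K' L' j" for j using eq tt tt' by (simp add: mkI_def)
  have P: "card K \<noteq> 0 \<longrightarrow> L \<noteq> 0" "card K = 0 \<longrightarrow> L = 1"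
    using lam_props[OF n5 I(5)] by auto
  have P': "card K' \<noteq> 0 \<longrightarrow> L' \<noteq> 0" "card K' = 0 \<longrightarrow> L' = 1"
    using lam_props[OF n5 I'(5)] by auto
  have LK: "L \<noteq> 0" if "K \<noteq> {}" using P I that by auto
  have LK': "L' \<noteq> 0" if "K' \<noteq> {}" using P' I' that by auto
  have AA: "A = A'"
  proof
    show "A \<subseteq> A'"
    proof
      fix i assume "i \<in> A"
      then have "1 \<le> i" "i \<le> n" using I by auto
      then show "i \<in> A'" using E[of "2*i-1"] mk_a[OF I(1,2)] mk_a[OF I'(1,2)] \<open>i \<in> A\<close>
        by (metis one_neq_zero)
    qed
    show "A' \<subseteq> A"
    proof
      fix i assume "i \<in> A'"
      then have "1 \<le> i" "i \<le> n" using I' by auto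
      then show "i \<in> A" using E[of "2*i-1"] mk_a[OF I(1,2)] mk_a[OF I'(1,2)] \<open>i \<in> A'\<close>
        by (metis one_neq_zero)
    qed
  qed
  have KK: "K = K'"
  proof
    show "K \<subseteq> K'"
    proof
      fix i assume "i \<in> K"
      then have "1 \<le> i" "i \<le> n" "L \<noteq> 0" using I LK by auto
      then show "i \<in> K'" using E[of "2*n+2*i-1"] mk_b[OF I(1,2)] mk_b[OF I'(1,2)] \<open>i \<in> K\<close>
        by (metis mult_zero_right mult_1_right)
    qed
    show "K' \<subseteq> K"
    proof
      fix i assume "i \<in> K'"
      then have "1 \<le> i" "i \<le> n" "L' \<noteq> 0" using I' LK' by auto
      then show "i \<in> K" using E[of "2*n+2*i-1"] mk_b[OF I(1,2)] mk_b[OF I'(1,2)] \<open>i \<in> K'\<close>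
        by (metis mult_zero_right mult_1_right)
    qed
  qed
  have LL: "L = L'"
  proof (cases "K = {}")
    case True
    then show ?thesis using P P' KK by simp
  next
    case False
    then obtain k where "k \<in> K" by auto
    then have "1 \<le> k" "k \<le> n" using I by auto
    then show ?thesis using E[of "2*n+2*k-1"] mk_b[OF I(1,2)] mk_b[OF I'(1,2)] \<open>k \<in> K\<close> KK by simp
  qed
  show "t = t'" using tt tt' AA KK LL by simp
qed



lemma exists_list: "finite (S::nat set) \<Longrightarrow> card S \<le> m \<Longrightarrow> S \<noteq> {} \<or> m = 0 \<Longrightarrow> \<exists>xs. set xs = S \<and> length xs = m"
proof -
  assume fS: "finite S" and cS: "card S \<le> m" and ne: "S \<noteq> {} \<or> m = 0"
  show ?thesis
  proof (cases "S = {}")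
    case True
    then have "m = 0" using ne by simp
    then show ?thesis using True by auto
  next
    case False
    let ?xs = "sorted_list_of_set S @ replicate (m - card S) (Min S)"
    have "Min S \<in> S" using False fS by simp
    then have "set ?xs = S" using fS by auto
    moreover have "length ?xs = m" using fS cS by simp
    ultimately show ?thesis by blast
  qed
qed

lemma abs_indep:
  fixes U :: "(nat set \<times> nat set \<times> real) set" and D :: "nat set"
    and c :: "nat set \<times> nat set \<times> real \<Rightarrow> real"
  assumes finU: "finite U" and finD: "finite D"
  and sub: "\<And>A K L. (A,K,L) \<in> U \<Longrightarrow> A \<subseteq> D \<and> K \<subseteq> D"
  and sz: "\<And>A K L. (A,K,L) \<in> U \<Longrightarrow> card A + card K \<le> 5 \<and> (A \<noteq> {} \<or> K \<noteq> {}) \<and> (K \<noteq> {} \<longrightarrow> L \<noteq> 0) \<and> (K = {} \<longrightarrow> L = 1)"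
  and h4: "\<And>A K L L' L''. (A,K,L) \<in> U \<Longrightarrow> (A,K,L') \<in> U \<Longrightarrow> (A,K,L'') \<in> U \<Longrightarrow> L = L' \<or> L = L'' \<or> L' = L''"
  and h5: "\<And>A K L L'. (A,K,L) \<in> U \<Longrightarrow> (A,K,L') \<in> U \<Longrightarrow> L \<noteq> L' \<Longrightarrow> A \<noteq> {} \<and> card A + card K \<le> 4"
  and eq: "\<And>ys zs. set ys \<subseteq> D \<Longrightarrow> set zs \<subseteq> D \<Longrightarrow> length ys + length zs = 5 \<Longrightarrow>
     (\<Sum>(A,K,L)\<in>U. c (A,K,L) * (if set ys \<subseteq> A \<and> set zs \<subseteq> K then L ^ length zs else 0)) = 0"
  shows "\<forall>t\<in>U. c t = 0"
proof -
  define \<mu> where "\<mu> = (\<lambda>(A::nat set,K::nat set,L::real). (if K = {} then 10 else 0) + (5 - (card A + card K)))"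
  have main: "\<forall>t\<in>U. \<mu> t = m \<longrightarrow> c t = 0" for m
  proof (induction m rule: less_induct)
    case (less m)
    show ?case
    proof (intro ballI impI)
      fix t assume tU: "t \<in> U" and mt: "\<mu> t = m"
      obtain A K L where t: "t = (A,K,L)" by (cases t)
      have tU': "(A,K,L) \<in> U" using tU t by simp
      have fA: "finite A" and fK: "finite K" using sub[OF tU'] finD finite_subset by auto
      have szt: "card A + card K \<le> 5" "A \<noteq> {} \<or> K \<noteq> {}" "K \<noteq> {} \<longrightarrow> L \<noteq> 0" "K = {} \<longrightarrow> L = 1"
        using sz[OF tU'] by auto
      have IH: "c (A',K',L') = 0" if t'U: "(A',K',L') \<in> U" and sA: "A \<subseteq> A'" and sK: "K \<subseteq> K'"
        and ne: "(A',K') \<noteq> (A,K)" for A' K' L'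
      proof -
        have fA': "finite A'" and fK': "finite K'" using sub[OF t'U] finD finite_subset by auto
        have s': "card A' + card K' \<le> 5" using sz[OF t'U] by auto
        have cA: "card A \<le> card A'" using sA fA' card_mono by blast
        have cK: "card K \<le> card K'" using sK fK' card_mono by blast
        have strict: "card A + card K < card A' + card K'"
        proof (cases "A = A'")
          case True
          then have "K \<noteq> K'" using ne by simp
          then have "K \<subset> K'" using sK by auto
          then have "card K < card K'" using fK' psubset_card_mono by blast
          then show ?thesis using cA by simp
        next
          case False
          then have "A \<subset> A'" using sA by auto
          then have "card A < card A'" using fA' psubset_card_mono by blast
          then show ?thesis using cK by simp
        qed
        have "\<mu> (A',K',L') < m"
        proof (cases "K = {}")
          case True
          then show ?thesis using mt t strict s' by (auto simp: \<mu>_def)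
        next
          case False
          then have "K' \<noteq> {}" using sK by auto
          then show ?thesis using mt t strict s' False by (auto simp: \<mu>_def)
        qed
        then show ?thesis using less.IH t'U by blast
      qed
      define G where "G = {t'\<in>U. fst t' = A \<and> fst (snd t') = K}"
      have finG: "finite G" using finU by (simp add: G_def)
      have red: "(\<Sum>(A',K',L')\<in>U. c (A',K',L') * (if A \<subseteq> A' \<and> K \<subseteq> K' then L'^e else 0))
                 = (\<Sum>t'\<in>G. c t' * (snd (snd t'))^e)" for e
      proof (rule sum.mono_neutral_cong_right[OF finU])
        show "G \<subseteq> U" by (auto simp: G_def)
        show "\<forall>i\<in>U - G. (case i of (A', K', L') \<Rightarrow> c (A', K', L') * (if A \<subseteq> A' \<and> K \<subseteq> K' then L' ^ e else 0)) = 0"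
        proof
          fix i assume i: "i \<in> U - G"
          obtain A' K' L' where ii: "i = (A',K',L')" by (cases i)
          show "(case i of (A', K', L') \<Rightarrow> c (A', K', L') * (if A \<subseteq> A' \<and> K \<subseteq> K' then L' ^ e else 0)) = 0"
          proof (cases "A \<subseteq> A' \<and> K \<subseteq> K'")
            case True
            have "(A',K') \<noteq> (A,K)" using i ii by (auto simp: G_def)
            then have "c (A',K',L') = 0" using IH True i ii by auto
            then show ?thesis using ii by simp
          next
            case False
            then show ?thesis using ii by auto
          qed
        qed
        show "(case x of (A', K', L') \<Rightarrow> c (A', K', L') * (if A \<subseteq> A' \<and> K \<subseteq> K' then L' ^ e else 0)) =
              c x * snd (snd x) ^ e" if "x \<in> G" for x
          using that by (auto simp: G_def split: prod.splits)
      qed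
      have E: "(\<Sum>t'\<in>G. c t' * (snd (snd t'))^e) = 0"
        if e1: "card K \<le> e" and e2: "card A + e \<le> 5" and e3: "A \<noteq> {} \<or> e = 5" and e4: "K \<noteq> {} \<or> e = 0" for e
      proof -
        have "card A \<le> 5 - e" "A \<noteq> {} \<or> 5 - e = 0" using e2 e3 by auto
        then obtain ys where ys: "set ys = A" "length ys = 5 - e"
          using exists_list[OF fA, of "5-e"] by blast
        obtain zs where zs: "set zs = K" "length zs = e"
          using exists_list[OF fK, of e] e1 e4 by auto
        have "set ys \<subseteq> D" "set zs \<subseteq> D" using ys zs sub[OF tU'] by auto
        moreover have "length ys + length zs = 5" using ys zs e2 by simp
        ultimately have "(\<Sum>(A',K',L')\<in>U. c (A',K',L') * (if set ys \<subseteq> A' \<and> set zs \<subseteq> K' then L'^length zs else 0)) = 0"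
          using eq by blast
        then have "(\<Sum>(A',K',L')\<in>U. c (A',K',L') * (if A \<subseteq> A' \<and> K \<subseteq> K' then L'^e else 0)) = 0"
          unfolding zs(2) ys(1) zs(1) .
        then show ?thesis using red[of e] by simp
      qed
      have tG: "t \<in> G" using tU t by (simp add: G_def)
      show "c t = 0"
      proof (cases "\<exists>t2\<in>G. snd (snd t2) \<noteq> L")
        case True
        then obtain t2 where t2G: "t2 \<in> G" and L2: "snd (snd t2) \<noteq> L" by blast
        obtain L2' where t2: "t2 = (A,K,L2')" using t2G by (cases t2) (auto simp: G_def)
        have t2U: "(A,K,L2') \<in> U" using t2G t2 by (simp add: G_def)
        have LL: "L \<noteq> L2'" using L2 t2 by simp
        have h: "A \<noteq> {}" "card A + card K \<le> 4" using h5[OF tU' t2U LL] by auto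
        have Kne: "K \<noteq> {}" using szt sz[OF t2U] LL by auto
        have G2: "G = {t, t2}"
        proof
          show "G \<subseteq> {t, t2}"
          proof
            fix t3 assume t3G: "t3 \<in> G"
            obtain L3 where t3: "t3 = (A,K,L3)" using t3G by (cases t3) (auto simp: G_def)
            have t3U: "(A,K,L3) \<in> U" using t3G t3 by (simp add: G_def)
            from h4[OF tU' t2U t3U] LL have "L = L3 \<or> L2' = L3" by auto
            then show "t3 \<in> {t, t2}" using t t2 t3 by auto
          qed
          show "{t, t2} \<subseteq> G" using tG t2G by auto
        qed
        have tt2: "t \<noteq> t2" using t t2 LL by simp
        have S: "c t * L^e + c t2 * L2'^e = 0" if "card K \<le> e" "card A + e \<le> 5" for e
          using E[of e] that h Kne G2 tt2 t t2 by simp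
        define e where "e = card K"
        have eq1: "c t * L^e + c t2 * L2'^e = 0" using S[of e] h by (simp add: e_def)
        have eq2: "c t * L^(Suc e) + c t2 * L2'^(Suc e) = 0" using S[of "Suc e"] h by (simp add: e_def)
        have "c t * L^e * (L2' - L) = L2' * (c t * L^e + c t2 * L2'^e) - (c t * L^(Suc e) + c t2 * L2'^(Suc e))"
          by (simp add: algebra_simps)
        then have "c t * L^e * (L2' - L) = 0" using eq1 eq2 by simp
        moreover have "L \<noteq> 0" using szt Kne by simp
        ultimately show ?thesis using LL by simp
      next
        case False
        have G1: "G = {t}"
        proof
          show "G \<subseteq> {t}"
          proof
            fix t3 assume t3G: "t3 \<in> G"
            obtain L3 where t3: "t3 = (A,K,L3)" using t3G by (cases t3) (auto simp: G_def)
            have "L3 = L" using False t3G t3 by auto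
            then show "t3 \<in> {t}" using t t3 by simp
          qed
          show "{t} \<subseteq> G" using tG by simp
        qed
        define e where "e = (if K = {} then 0 else if A = {} then 5 else card K)"
        have "(\<Sum>t'\<in>G. c t' * (snd (snd t'))^e) = 0"
        proof (rule E)
          show "card K \<le> e" using szt fK by (auto simp: e_def)
          show "card A + e \<le> 5" using szt fK fA by (auto simp: e_def)
          show "A \<noteq> {} \<or> e = 5" using szt by (auto simp: e_def)
          show "K \<noteq> {} \<or> e = 0" by (auto simp: e_def)
        qed
        then have "c t * L^e = 0" using G1 t by simp
        moreover have "L \<noteq> 0" using szt by (cases "K = {}") auto
        ultimately show ?thesis by simp
      qed
    qed
  qed
  show ?thesis using main by blast
qed



definition tup :: "(nat \<Rightarrow> nat) \<Rightarrow> nat \<times> nat \<times> nat \<times> nat \<times> nat" where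
  "tup g = (g 0, g 1, g 2, g 3, g 4)"

lemma tensor5_tup: "tensor5 v (tup g) = (\<Prod>m<5. v (g m))"
  by (simp add: tensor5_def tup_def eval_nat_numeral prod.lessThan_Suc mult_ac)

lemma prod_list_nth: "prod_list (map f ws) = (\<Prod>i<length ws. f (ws!i))"
  by (induction ws) (simp_all add: prod.lessThan_Suc_shift del: prod.lessThan_Suc)

definition S1 :: "nat \<Rightarrow> ((nat \<Rightarrow> real) \<Rightarrow> real) \<Rightarrow> (nat \<Rightarrow> nat) \<Rightarrow> real" where
  "S1 n c g = (\<Sum>u\<in>Uset n. c u * (\<Prod>m<5. u (g m)))"

definition S2 :: "nat \<Rightarrow> ((nat \<Rightarrow> real) \<Rightarrow> real) \<Rightarrow> (nat \<Rightarrow> nat) \<Rightarrow> real" where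
  "S2 n c g = (\<Sum>u\<in>Uset n. c u * (\<Prod>m<5. piv n u (g m)))"

lemma Uset_mk: "u \<in> Uset n \<Longrightarrow> \<exists>A K L. (A,K,L) \<in> Idx n \<and> u = mk n A K L"
proof -
  assume "u \<in> Uset n"
  then obtain t where t: "t \<in> Idx n" "u = mkI n t" using Uset_sub[of n] by blast
  obtain A K L where "t = (A,K,L)" by (cases t)
  then show ?thesis using t by (auto simp: mkI_def)
qed

lemma pair1: assumes u: "u \<in> Uset n" and j: "odd j" "j < 4*n" shows "u j = u (Suc j)"
proof -
  obtain A K L where I: "(A,K,L) \<in> Idx n" and uu: "u = mk n A K L" using Uset_mk[OF u] by blast
  have f: "finite A" "finite K" using Idx_fin[OF I] by auto
  obtain i where ji: "j = 2*i+1" using j by (metis oddE)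
  have j1: "1 \<le> j" using ji by simp
  show ?thesis
  proof (cases "j < 2*n")
    case True
    then have "Suc j \<le> 2*n" using ji by simp
    moreover have "(j+1) div 2 = (Suc j + 1) div 2" using ji by simp
    ultimately show ?thesis using True uu f j1 by (simp add: mk_val)
  next
    case False
    then have "2*n < j" using ji by presburger
    moreover have "Suc j \<le> 4*n" using j ji by simp
    moreover have "(j - 2*n + 1) div 2 = (Suc j - 2*n + 1) div 2" using ji \<open>2*n < j\<close> by presburger
    ultimately show ?thesis using uu f j by (simp add: mk_val)
  qed
qed

lemma pair2: assumes u: "u \<in> Uset n" and j: "even j" "2 \<le> j" "j \<noteq> 2*n" "j < 4*n"
  shows "piv n u j = piv n u (Suc j)"
proof -
  obtain i where ji: "j = 2*i" using j(1) by (rule evenE)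
  have i1: "i < 2*n" using ji j(4) by simp
  have s: "Suc j < 4*n" using ji i1 by simp
  show ?thesis
  proof (cases "j < 2*n")
    case True
    then have "i < n" using ji by simp
    have sj: "Suc j < 2*n" using ji \<open>i < n\<close> by simp
    have p1: "pidx n j = 2*n+j+1" using True by (simp add: pidx_def)
    have p2: "pidx n (Suc j) = Suc (2*n+j+1)" using sj by (simp add: pidx_def)
    have o: "odd (2*n+j+1)" using ji by simp
    have l: "2*n+j+1 < 4*n" using sj by simp
    have "u (2*n+j+1) = u (Suc (2*n+j+1))" by (rule pair1[OF u o l])
    then show ?thesis using s j(2) p1 p2 by (simp add: piv_def)
  next
    case False
    then have gt: "2*n < j" using j(3) by simp
    then have "n < i" using ji by simp
    have p1: "pidx n j = j - 2*n + 1" using gt j(4) by (simp add: pidx_def)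
    have p2: "pidx n (Suc j) = Suc (j - 2*n + 1)" using gt s by (simp add: pidx_def)
    have e: "j - 2*n + 1 = 2*(i-n) + 1" using ji gt by simp
    have o: "odd (j - 2*n + 1)" unfolding e by simp
    have l: "j - 2*n + 1 < 4*n" using j(4) gt by simp
    have "u (j - 2*n + 1) = u (Suc (j - 2*n + 1))" by (rule pair1[OF u o l])
    then show ?thesis using s j(2) p1 p2 by (simp add: piv_def)
  qed
qed



lemma S1_upd_eq: assumes "\<forall>u\<in>Uset n. u j = u j'"
  shows "S1 n c (g(m0:=j)) = S1 n c (g(m0:=j'))"
proof -
  have "(\<Prod>m<5. u ((g(m0:=j)) m)) = (\<Prod>m<5. u ((g(m0:=j')) m))" if "u \<in> Uset n" for u
    using assms that by (intro prod.cong) auto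
  then show ?thesis unfolding S1_def by (intro sum.cong) auto
qed

lemma S2_upd_eq: assumes "\<forall>u\<in>Uset n. piv n u j = piv n u j'"
  shows "S2 n c (g(m0:=j)) = S2 n c (g(m0:=j'))"
proof -
  have "(\<Prod>m<5. piv n u ((g(m0:=j)) m)) = (\<Prod>m<5. piv n u ((g(m0:=j')) m))" if "u \<in> Uset n" for u
    using assms that by (intro prod.cong) auto
  then show ?thesis unfolding S2_def by (intro sum.cong) auto
qed

lemma step: assumes H: "\<forall>g. S1 n c1 g + S2 n c2 g = 0"
  and j: "1 \<le> j" "Suc j \<le> 4*n" "j \<noteq> 2*n"
  shows "S1 n c1 (g(m0:=j)) = S1 n c1 (g(m0:=Suc j))"
proof (cases "odd j")
  case True
  have "\<forall>u\<in>Uset n. u j = u (Suc j)" using pair1 True j by auto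
  then show ?thesis by (rule S1_upd_eq)
next
  case False
  then have "2 \<le> j" using j by presburger
  have "\<forall>u\<in>Uset n. piv n u j = piv n u (Suc j)" using pair2 False j \<open>2 \<le> j\<close> by auto
  then have "S2 n c2 (g(m0:=j)) = S2 n c2 (g(m0:=Suc j))" by (rule S2_upd_eq)
  moreover have "S1 n c1 (g(m0:=j)) + S2 n c2 (g(m0:=j)) = 0" using H by blast
  moreover have "S1 n c1 (g(m0:=Suc j)) + S2 n c2 (g(m0:=Suc j)) = 0" using H by blast
  ultimately show ?thesis by linarith
qed

lemma move_a: assumes H: "\<forall>g. S1 n c1 g + S2 n c2 g = 0"
  shows "1 \<le> j \<Longrightarrow> j \<le> 2*n \<Longrightarrow> S1 n c1 (g(m0:=j)) = S1 n c1 (g(m0:=1))"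
proof (induction j)
  case 0 then show ?case by simp
next
  case (Suc j)
  show ?case
  proof (cases "j = 0")
    case True then show ?thesis by simp
  next
    case False
    then have jj: "1 \<le> j" "j \<le> 2*n" "Suc j \<le> 4*n" "j \<noteq> 2*n" using Suc.prems by auto
    have a: "S1 n c1 (g(m0:=j)) = S1 n c1 (g(m0:=1))" using Suc.IH jj by blast
    have b: "S1 n c1 (g(m0:=j)) = S1 n c1 (g(m0:=Suc j))" using step[OF H jj(1,3,4)] .
    show ?thesis using a b by linarith
  qed
qed

lemma move_b: assumes H: "\<forall>g. S1 n c1 g + S2 n c2 g = 0"
  shows "2*n+1 \<le> j \<Longrightarrow> j \<le> 4*n \<Longrightarrow> S1 n c1 (g(m0:=j)) = S1 n c1 (g(m0:=2*n+1))"
proof (induction j)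
  case 0 then show ?case by simp
next
  case (Suc j)
  show ?case
  proof (cases "Suc j = 2*n+1")
    case True then show ?thesis by simp
  next
    case False
    then have jj: "2*n+1 \<le> j" "j \<le> 4*n" "1 \<le> j" "Suc j \<le> 4*n" "j \<noteq> 2*n" using Suc.prems by auto
    have a: "S1 n c1 (g(m0:=j)) = S1 n c1 (g(m0:=2*n+1))" using Suc.IH jj by blast
    have b: "S1 n c1 (g(m0:=j)) = S1 n c1 (g(m0:=Suc j))" using step[OF H jj(3,4,5)] .
    show ?thesis using a b by linarith
  qed
qed

definition cn :: "nat \<Rightarrow> nat \<Rightarrow> nat" where "cn n j = (if j \<le> 2*n then 1 else 2*n+1)"

lemma one_slot: assumes H: "\<forall>g. S1 n c1 g + S2 n c2 g = 0"
  and r: "1 \<le> g m0" "g m0 \<le> 4*n"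
  shows "S1 n c1 g = S1 n c1 (g(m0 := cn n (g m0)))"
proof -
  have gg: "g = g(m0 := g m0)" by simp
  show ?thesis
  proof (cases "g m0 \<le> 2*n")
    case True
    then show ?thesis using move_a[OF H r(1) True, of g m0] by (simp add: cn_def)
  next
    case False
    then show ?thesis using move_b[OF H _ r(2), of g m0] by (simp add: cn_def)
  qed
qed

lemma S1_cong: "(\<And>m. m < 5 \<Longrightarrow> g m = g' m) \<Longrightarrow> S1 n c g = S1 n c g'"
  unfolding S1_def by (intro sum.cong prod.cong) auto

lemma all_slots: assumes H: "\<forall>g. S1 n c1 g + S2 n c2 g = 0"
  and r: "\<And>m. m < 5 \<Longrightarrow> 1 \<le> g m \<and> g m \<le> 4*n"
  shows "S1 n c1 g = S1 n c1 (\<lambda>m. cn n (g m))"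
proof -
  define h where "h = (\<lambda>k m. if m < k then cn n (g m) else g m)"
  have "k \<le> 5 \<Longrightarrow> S1 n c1 g = S1 n c1 (h k)" for k
  proof (induction k)
    case 0 then show ?case by (simp add: h_def)
  next
    case (Suc k)
    have hk: "h k k = g k" by (simp add: h_def)
    have "k < 5" using Suc.prems by simp
    then have rr: "1 \<le> h k k" "h k k \<le> 4*n" using r hk by auto
    have hs: "h (Suc k) = (h k)(k := cn n (h k k))" by (rule ext) (simp add: h_def hk)
    have "S1 n c1 g = S1 n c1 (h k)" using Suc by simp
    also have "\<dots> = S1 n c1 ((h k)(k := cn n (h k k)))" using one_slot[OF H, of "h k" k] rr by blast
    also have "\<dots> = S1 n c1 (h (Suc k))" by (simp only: hs)
    finally show ?case .
  qed
  then have "S1 n c1 g = S1 n c1 (h 5)" by simp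
  also have "\<dots> = S1 n c1 (\<lambda>m. cn n (g m))" by (rule S1_cong) (simp add: h_def)
  finally show ?thesis .
qed



lemma piv_a: "1 \<le> k \<Longrightarrow> k \<le> n \<Longrightarrow> piv n u (2*k-1) = u (2*n+2*k)"
proof -
  assume "1 \<le> k" "k \<le> n"
  then have "1 \<le> 2*k-1" "2*k-1 \<le> 4*n" "2*k-1 < 2*n" "2*n + (2*k-1) + 1 = 2*n+2*k" by auto
  then show ?thesis by (simp add: piv_def pidx_def)
qed

lemma piv_b: "1 \<le> i \<Longrightarrow> i \<le> n \<Longrightarrow> piv n u (2*n+2*i-1) = u (2*i)"
proof -
  assume "1 \<le> i" "i \<le> n"
  then have "1 \<le> 2*n+2*i-1" "2*n+2*i-1 \<le> 4*n" "\<not> 2*n+2*i-1 < 2*n" "2*n+2*i-1 \<noteq> 2*n"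
     "2*n+2*i-1 < 4*n" "2*n+2*i-1 - 2*n + 1 = 2*i" by auto
  then show ?thesis by (simp add: piv_def pidx_def)
qed

definition yv :: "nat \<Rightarrow> (nat \<Rightarrow> bool) \<Rightarrow> nat \<Rightarrow> nat" where
  "yv n b m = (if b m then 2*n+2*m+1 else 2*m+1)"

lemma card_K_le: assumes n5: "n \<ge> 5" and I: "(A,K,L) \<in> Idx n" shows "card K \<le> 2"
  using lam_props[OF n5] Idx_fin[OF I] by blast

lemma nice_vanish: assumes n5: "n \<ge> 5" and u: "u \<in> Uset n" and v: "v \<in> Uset n"
  shows "(\<Prod>m<5. u (yv n b m)) = 0 \<or> (\<Prod>m<5. piv n v (yv n b m)) = 0"
proof (rule ccontr)
  assume "\<not> ?thesis"
  then have nu: "\<And>m. m < 5 \<Longrightarrow> u (yv n b m) \<noteq> 0" and nv: "\<And>m. m < 5 \<Longrightarrow> piv n v (yv n b m) \<noteq> 0"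
    by (auto simp: prod_zero_iff)
  obtain A K L where I: "(A,K,L) \<in> Idx n" and uu: "u = mk n A K L" using Uset_mk[OF u] by blast
  obtain A' K' L' where I': "(A',K',L') \<in> Idx n" and vv: "v = mk n A' K' L'" using Uset_mk[OF v] by blast
  have f: "finite A" "finite K" "finite A'" "finite K'" using Idx_fin[OF I] Idx_fin[OF I'] by auto
  have cK: "card K \<le> 2" "card K' \<le> 2" using card_K_le[OF n5 I] card_K_le[OF n5 I'] by auto
  have rng: "1 \<le> Suc m" "Suc m \<le> n" if "m < 5" for m using that n5 by auto
  have s1: "Suc ` {m\<in>{..<5}. b m} \<subseteq> K"
  proof
    fix x assume "x \<in> Suc ` {m\<in>{..<5}. b m}"
    then obtain m where m: "m < 5" "b m" "x = Suc m" by auto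
    have e: "2*n+2*Suc m-1 = 2*n+2*m+1" by simp
    have "u (yv n b m) = L * (if Suc m \<in> K then 1 else 0)"
      using mk_b[OF f(1,2) rng[OF m(1)], of L] uu m(2) e by (simp add: yv_def)
    then show "x \<in> K" using nu[OF m(1)] m(3) by (auto split: if_splits)
  qed
  have s2: "Suc ` {m\<in>{..<5}. \<not> b m} \<subseteq> K'"
  proof
    fix x assume "x \<in> Suc ` {m\<in>{..<5}. \<not> b m}"
    then obtain m where m: "m < 5" "\<not> b m" "x = Suc m" by auto
    have e: "2*Suc m-1 = 2*m+1" by simp
    have "piv n v (yv n b m) = v (2*n+2*Suc m)"
      using piv_a[OF rng[OF m(1)], of v] m(2) e by (simp add: yv_def)
    also have "\<dots> = L' * (if Suc m \<in> K' then 1 else 0)"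
      using mk_b2[OF f(3,4) rng[OF m(1)], of L'] vv by simp
    finally show "x \<in> K'" using nv[OF m(1)] m(3) by (auto split: if_splits)
  qed
  have c1: "card {m\<in>{..<5}. b m} \<le> 2"
    using card_mono[OF f(2) s1] card_image[of Suc] cK by (simp add: inj_on_def)
  have c2: "card {m\<in>{..<5}. \<not> b m} \<le> 2"
    using card_mono[OF f(4) s2] card_image[of Suc] cK by (simp add: inj_on_def)
  have "card {m\<in>{..<5::nat}. b m} + card {m\<in>{..<5}. \<not> b m} = card ({m\<in>{..<5::nat}. b m} \<union> {m\<in>{..<5}. \<not> b m})"
    by (rule card_Un_disjoint[symmetric]) auto
  also have "{m\<in>{..<5::nat}. b m} \<union> {m\<in>{..<5}. \<not> b m} = {..<5}" by auto
  finally show False using c1 c2 by simp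
qed



lemma Uset_out: "u \<in> Uset n \<Longrightarrow> j = 0 \<or> 4*n < j \<Longrightarrow> u j = 0"
proof -
  assume u: "u \<in> Uset n" and j: "j = 0 \<or> 4*n < j"
  obtain A K L where I: "(A,K,L) \<in> Idx n" and uu: "u = mk n A K L" using Uset_mk[OF u] by blast
  have f: "finite A" "finite K" using Idx_fin[OF I] by auto
  show ?thesis using j uu f by (auto simp: mk_val)
qed

lemma S1_zero: assumes n5: "n \<ge> 5" and H: "\<forall>g. S1 n c1 g + S2 n c2 g = 0"
  shows "S1 n c1 g = 0"
proof (cases "\<exists>m<5. g m = 0 \<or> 4*n < g m")
  case True
  then obtain m where m: "m < 5" "g m = 0 \<or> 4*n < g m" by blast
  have "(\<Prod>m<5. u (g m)) = 0" if "u \<in> Uset n" for u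
    using Uset_out[OF that m(2)] m(1) by (auto simp: prod_zero_iff)
  then have "\<forall>u\<in>Uset n. c1 u * (\<Prod>m<5. u (g m)) = 0" by simp
  then show ?thesis unfolding S1_def by (rule sum.neutral)
next
  case False
  then have r: "\<And>m. m < 5 \<Longrightarrow> 1 \<le> g m \<and> g m \<le> 4*n" by force
  define b where "b = (\<lambda>m. 2*n < g m)"
  define y where "y = yv n b"
  have ry: "\<And>m. m < 5 \<Longrightarrow> 1 \<le> y m \<and> y m \<le> 4*n" using n5 by (auto simp: y_def yv_def)
  have cy: "cn n (y m) = cn n (g m)" if "m < 5" for m
    using that n5 by (auto simp: y_def yv_def cn_def b_def)
  have "S1 n c1 g = S1 n c1 (\<lambda>m. cn n (g m))" by (rule all_slots[OF H r])
  also have "\<dots> = S1 n c1 (\<lambda>m. cn n (y m))" by (rule S1_cong) (simp add: cy)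
  also have "\<dots> = S1 n c1 y" by (rule all_slots[OF H ry, symmetric])
  also have "\<dots> = 0"
  proof (cases "\<exists>u\<in>Uset n. (\<Prod>m<5. u (y m)) \<noteq> 0")
    case True
    then obtain u where u: "u \<in> Uset n" "(\<Prod>m<5. u (y m)) \<noteq> 0" by blast
    have "(\<Prod>m<5. piv n v (y m)) = 0" if "v \<in> Uset n" for v
      using nice_vanish[OF n5 u(1) that, of b] u(2) by (simp add: y_def)
    then have "\<forall>v\<in>Uset n. c2 v * (\<Prod>m<5. piv n v (y m)) = 0" by simp
    then have "S2 n c2 y = 0" unfolding S2_def by (rule sum.neutral)
    moreover have "S1 n c1 y + S2 n c2 y = 0" using H by blast
    ultimately show ?thesis by linarith
  next
    case False
    then have "\<forall>v\<in>Uset n. c1 v * (\<Prod>m<5. v (y m)) = 0" by auto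
    then show ?thesis unfolding S1_def by (rule sum.neutral)
  qed
  finally show ?thesis .
qed



lemma lam_fin: "finite (lam n a k)"
  by (simp add: lam_def Let_def)

lemma Idx_finite: "finite (Idx n)"
proof -
  have "Idx n \<subseteq> Pow {1..n} \<times> Pow {1..n} \<times> (\<Union>a\<in>{..n}. \<Union>k\<in>{..n}. lam n a k)"
  proof
    fix t assume t: "t \<in> Idx n"
    obtain A K L where tt: "t = (A,K,L)" by (cases t)
    have I: "A \<subseteq> {1..n}" "K \<subseteq> {1..n}" "L \<in> lam n (card A) (card K)" using t tt by (auto simp: Idx_def)
    have "card A \<le> n" using card_mono[OF _ I(1)] by simp
    moreover have "card K \<le> n" using card_mono[OF _ I(2)] by simp
    ultimately show "t \<in> Pow {1..n} \<times> Pow {1..n} \<times> (\<Union>a\<in>{..n}. \<Union>k\<in>{..n}. lam n a k)"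
      using I tt by auto
  qed
  moreover have "finite (Pow {1..n} \<times> Pow {1..n} \<times> (\<Union>a\<in>{..n}. \<Union>k\<in>{..n}. lam n a k))"
    by (simp add: lam_fin)
  ultimately show ?thesis by (rule finite_subset)
qed

lemma pl1: "prod_list (map (\<lambda>i. if i \<in> A then 1 else (0::real)) ys) = (if set ys \<subseteq> A then 1 else 0)"
  by (induction ys) auto

lemma pl2: "prod_list (map (\<lambda>k. L * (if k \<in> K then 1 else (0::real))) zs) = (if set zs \<subseteq> K then L ^ length zs else 0)"
  by (induction zs) auto

lemma one_sided_gen:
  assumes n5: "n \<ge> 5"
  and eqs: "\<And>ys zs. set ys \<subseteq> {1..n} \<Longrightarrow> set zs \<subseteq> {1..n} \<Longrightarrow> length ys + length zs = 5 \<Longrightarrow>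
     (\<Sum>u\<in>Uset n. c u * F ys zs u) = 0"
  and FF: "\<And>ys zs A K L. set ys \<subseteq> {1..n} \<Longrightarrow> set zs \<subseteq> {1..n} \<Longrightarrow> (A,K,L) \<in> Idx n \<Longrightarrow>
     F ys zs (mk n A K L) = (if set ys \<subseteq> A \<and> set zs \<subseteq> K then L ^ length zs else 0)"
  shows "\<forall>u\<in>Uset n. c u = 0"
proof -
  define U' where "U' = {t\<in>Idx n. mkI n t \<in> Uset n}"
  have UU: "Uset n = mkI n ` U'" using Uset_sub[of n] by (auto simp: U'_def)
  have inj: "inj_on (mkI n) U'" using inj_mkI[OF n5] by (rule inj_on_subset) (auto simp: U'_def)
  have finU: "finite U'" using Idx_finite[of n] by (auto simp: U'_def)
  have UI: "t \<in> Idx n" if "t \<in> U'" for t using that by (simp add: U'_def)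
  have "\<forall>t\<in>U'. (c \<circ> mkI n) t = 0"
  proof (rule abs_indep[where D="{1..n}"])
    show "finite U'" by (rule finU)
    show "finite {1..n}" by simp
    show "A \<subseteq> {1..n} \<and> K \<subseteq> {1..n}" if "(A,K,L) \<in> U'" for A K L
      using UI[OF that] by (simp add: Idx_def)
    show "card A + card K \<le> 5 \<and> (A \<noteq> {} \<or> K \<noteq> {}) \<and> (K \<noteq> {} \<longrightarrow> L \<noteq> 0) \<and> (K = {} \<longrightarrow> L = 1)"
      if "(A,K,L) \<in> U'" for A K L
    proof -
      have I: "finite A" "finite K" "L \<in> lam n (card A) (card K)" using Idx_fin[OF UI[OF that]] by auto
      show ?thesis using lam_props[OF n5 I(3)] I(1,2) by auto
    qed
    show "L = L' \<or> L = L'' \<or> L' = L''" if "(A,K,L) \<in> U'" "(A,K,L') \<in> U'" "(A,K,L'') \<in> U'" for A K L L' L''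
      using lam3 Idx_fin[OF UI[OF that(1)]] Idx_fin[OF UI[OF that(2)]] Idx_fin[OF UI[OF that(3)]] by blast
    show "A \<noteq> {} \<and> card A + card K \<le> 4" if "(A,K,L) \<in> U'" "(A,K,L') \<in> U'" "L \<noteq> L'" for A K L L'
    proof -
      have "card A \<noteq> 0 \<and> card A + card K \<le> 4"
        using lam2 Idx_fin[OF UI[OF that(1)]] Idx_fin[OF UI[OF that(2)]] that(3) by blast
      then show ?thesis by auto
    qed
    show "(\<Sum>(A,K,L)\<in>U'. (c \<circ> mkI n) (A,K,L) * (if set ys \<subseteq> A \<and> set zs \<subseteq> K then L ^ length zs else 0)) = 0"
      if "set ys \<subseteq> {1..n}" "set zs \<subseteq> {1..n}" "length ys + length zs = 5" for ys zs
    proof -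
      have "0 = (\<Sum>u\<in>Uset n. c u * F ys zs u)" using eqs[OF that] by simp
      also have "\<dots> = (\<Sum>t\<in>U'. c (mkI n t) * F ys zs (mkI n t))"
        unfolding UU by (simp add: sum.reindex[OF inj])
      also have "\<dots> = (\<Sum>(A,K,L)\<in>U'. (c \<circ> mkI n) (A,K,L) * (if set ys \<subseteq> A \<and> set zs \<subseteq> K then L ^ length zs else 0))"
      proof (rule sum.cong)
        fix t assume tU: "t \<in> U'"
        obtain A K L where tt: "t = (A,K,L)" by (cases t)
        show "c (mkI n t) * F ys zs (mkI n t) = (case t of (A,K,L) \<Rightarrow> (c \<circ> mkI n) (A,K,L) * (if set ys \<subseteq> A \<and> set zs \<subseteq> K then L ^ length zs else 0))"
          using FF[OF that(1,2)] UI[OF tU] tt by (simp add: mkI_def)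
      qed simp
      finally show ?thesis by simp
    qed
  qed
  then show ?thesis using UU by auto
qed



lemma one_sided1: assumes n5: "n \<ge> 5" and Z: "\<forall>g. S1 n c g = 0" shows "\<forall>u\<in>Uset n. c u = 0"
proof (rule one_sided_gen[OF n5, where F="\<lambda>ys zs u. prod_list (map u (map (\<lambda>i. 2*i-1) ys @ map (\<lambda>k. 2*n+2*k-1) zs))"])
  fix ys zs :: "nat list"
  assume ys: "set ys \<subseteq> {1..n}" and zs: "set zs \<subseteq> {1..n}" and l: "length ys + length zs = 5"
  define ws where "ws = map (\<lambda>i. 2*i-1) ys @ map (\<lambda>k. 2*n+2*k-1) zs"
  have lw: "length ws = 5" using l by (simp add: ws_def)
  have "S1 n c (\<lambda>m. ws!m) = (\<Sum>u\<in>Uset n. c u * prod_list (map u ws))"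
    unfolding S1_def prod_list_nth lw ..
  then show "(\<Sum>u\<in>Uset n. c u * prod_list (map u (map (\<lambda>i. 2*i-1) ys @ map (\<lambda>k. 2*n+2*k-1) zs))) = 0"
    using Z by (simp add: ws_def)
next
  fix ys zs :: "nat list" and A K L
  assume ys: "set ys \<subseteq> {1..n}" and zs: "set zs \<subseteq> {1..n}" and I: "(A,K,L) \<in> Idx n"
  have f: "finite A" "finite K" using Idx_fin[OF I] by auto
  have a: "map (mk n A K L) (map (\<lambda>i. 2*i-1) ys) = map (\<lambda>i. if i \<in> A then 1 else 0) ys"
    using ys mk_a[OF f] by (auto intro!: map_cong)
  have b: "map (mk n A K L) (map (\<lambda>k. 2*n+2*k-1) zs) = map (\<lambda>k. L * (if k \<in> K then 1 else 0)) zs"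
    using zs mk_b[OF f] by (auto intro!: map_cong)
  have "prod_list (map (mk n A K L) (map (\<lambda>i. 2*i-1) ys @ map (\<lambda>k. 2*n+2*k-1) zs)) =
     prod_list (map (mk n A K L) (map (\<lambda>i. 2*i-1) ys)) * prod_list (map (mk n A K L) (map (\<lambda>k. 2*n+2*k-1) zs))"
    by (simp only: map_append prod_list.append)
  also have "\<dots> = (if set ys \<subseteq> A then 1 else 0) * (if set zs \<subseteq> K then L ^ length zs else 0)"
    by (simp only: a b pl1 pl2)
  finally show "prod_list (map (mk n A K L) (map (\<lambda>i. 2*i-1) ys @ map (\<lambda>k. 2*n+2*k-1) zs)) =
    (if set ys \<subseteq> A \<and> set zs \<subseteq> K then L ^ length zs else 0)"
    by simp
qed

lemma one_sided2: assumes n5: "n \<ge> 5" and Z: "\<forall>g. S2 n c g = 0" shows "\<forall>u\<in>Uset n. c u = 0"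
proof (rule one_sided_gen[OF n5, where F="\<lambda>ys zs u. prod_list (map (piv n u) (map (\<lambda>i. 2*n+2*i-1) ys @ map (\<lambda>k. 2*k-1) zs))"])
  fix ys zs :: "nat list"
  assume ys: "set ys \<subseteq> {1..n}" and zs: "set zs \<subseteq> {1..n}" and l: "length ys + length zs = 5"
  define ws where "ws = map (\<lambda>i. 2*n+2*i-1) ys @ map (\<lambda>k. 2*k-1) zs"
  have lw: "length ws = 5" using l by (simp add: ws_def)
  have "S2 n c (\<lambda>m. ws!m) = (\<Sum>u\<in>Uset n. c u * prod_list (map (piv n u) ws))"
    unfolding S2_def prod_list_nth lw ..
  then show "(\<Sum>u\<in>Uset n. c u * prod_list (map (piv n u) (map (\<lambda>i. 2*n+2*i-1) ys @ map (\<lambda>k. 2*k-1) zs))) = 0"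
    using Z by (simp add: ws_def)
next
  fix ys zs :: "nat list" and A K L
  assume ys: "set ys \<subseteq> {1..n}" and zs: "set zs \<subseteq> {1..n}" and I: "(A,K,L) \<in> Idx n"
  have f: "finite A" "finite K" using Idx_fin[OF I] by auto
  have a: "map (piv n (mk n A K L)) (map (\<lambda>i. 2*n+2*i-1) ys) = map (\<lambda>i. if i \<in> A then 1 else 0) ys"
    using ys piv_b mk_a2[OF f] by (auto intro!: map_cong)
  have b: "map (piv n (mk n A K L)) (map (\<lambda>k. 2*k-1) zs) = map (\<lambda>k. L * (if k \<in> K then 1 else 0)) zs"
    using zs piv_a mk_b2[OF f] by (auto intro!: map_cong)
  have "prod_list (map (piv n (mk n A K L)) (map (\<lambda>i. 2*n+2*i-1) ys @ map (\<lambda>k. 2*k-1) zs)) =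
     prod_list (map (piv n (mk n A K L)) (map (\<lambda>i. 2*n+2*i-1) ys)) * prod_list (map (piv n (mk n A K L)) (map (\<lambda>k. 2*k-1) zs))"
    by (simp only: map_append prod_list.append)
  also have "\<dots> = (if set ys \<subseteq> A then 1 else 0) * (if set zs \<subseteq> K then L ^ length zs else 0)"
    by (simp only: a b pl1 pl2)
  finally show "prod_list (map (piv n (mk n A K L)) (map (\<lambda>i. 2*n+2*i-1) ys @ map (\<lambda>k. 2*k-1) zs)) =
    (if set ys \<subseteq> A \<and> set zs \<subseteq> K then L ^ length zs else 0)"
    by simp
qed

lemma tup_surj: "\<exists>g. x = tup g"
proof -
  obtain a b c d e where x: "x = (a,b,c,d,e)" by (cases x) auto
  let ?g = "\<lambda>m::nat. if m=0 then a else if m=1 then b else if m=2 then c else if m=3 then d else e"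
  have "x = tup ?g" using x by (simp add: tup_def)
  then show ?thesis by blast
qed

theorem proposition5p8:
  fixes n :: nat
  assumes "n \<ge> 5"
  shows "(\<forall>c1 c2 :: (nat \<Rightarrow> real) \<Rightarrow> real.
            (\<forall>x. (\<Sum>u\<in>Uset n. c1 u * tensor5 u x + c2 u * tensor5 (piv n u) x) = 0)
            \<longrightarrow> (\<forall>u\<in>Uset n. c1 u = 0 \<and> c2 u = 0))
       \<and> (\<forall>c1 c2 :: (nat \<Rightarrow> real) \<Rightarrow> real.
            (\<forall>x. (\<Sum>u\<in>Uset n. c1 u * tensor5 u x) + (\<Sum>u\<in>Uset n. c2 u * tensor5 (piv n u) x) = 0)
            \<longrightarrow> (\<forall>x. (\<Sum>u\<in>Uset n. c1 u * tensor5 u x) = 0)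
              \<and> (\<forall>x. (\<Sum>u\<in>Uset n. c2 u * tensor5 (piv n u) x) = 0))"
proof -
  have T1: "(\<Sum>u\<in>Uset n. c u * tensor5 u (tup g)) = S1 n c g" for c g
    by (simp add: S1_def tensor5_tup)
  have T2: "(\<Sum>u\<in>Uset n. c u * tensor5 (piv n u) (tup g)) = S2 n c g" for c g
    by (simp add: S2_def tensor5_tup)
  have key: "(\<forall>g. S1 n c1 g = 0) \<and> (\<forall>g. S2 n c2 g = 0)" if H: "\<forall>g. S1 n c1 g + S2 n c2 g = 0" for c1 c2
  proof -
    have "S1 n c1 g = 0" for g using S1_zero[OF assms H] .
    moreover have "S2 n c2 g = 0" for g
    proof -
      have "S1 n c1 g + S2 n c2 g = 0" using H by blast
      then show ?thesis using \<open>\<And>g. S1 n c1 g = 0\<close>[of g] by linarith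
    qed
    ultimately show ?thesis by blast
  qed
  show ?thesis
  proof (intro conjI allI impI)
    fix c1 c2 :: "(nat \<Rightarrow> real) \<Rightarrow> real"
    assume h: "\<forall>x. (\<Sum>u\<in>Uset n. c1 u * tensor5 u x + c2 u * tensor5 (piv n u) x) = 0"
    have H: "\<forall>g. S1 n c1 g + S2 n c2 g = 0"
    proof
      fix g
      have "(\<Sum>u\<in>Uset n. c1 u * tensor5 u (tup g) + c2 u * tensor5 (piv n u) (tup g)) = 0" using h by blast
      then show "S1 n c1 g + S2 n c2 g = 0" by (simp add: sum.distrib T1 T2)
    qed
    from key[OF H] show "\<forall>u\<in>Uset n. c1 u = 0 \<and> c2 u = 0"
      using one_sided1[OF assms] one_sided2[OF assms] by blast
  next
    fix c1 c2 :: "(nat \<Rightarrow> real) \<Rightarrow> real"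
    assume h: "\<forall>x. (\<Sum>u\<in>Uset n. c1 u * tensor5 u x) + (\<Sum>u\<in>Uset n. c2 u * tensor5 (piv n u) x) = 0"
    have H: "\<forall>g. S1 n c1 g + S2 n c2 g = 0"
    proof
      fix g show "S1 n c1 g + S2 n c2 g = 0" using h[rule_format, of "tup g"] T1 T2 by simp
    qed
    fix x
    obtain g where x: "x = tup g" using tup_surj by blast
    show "(\<Sum>u\<in>Uset n. c1 u * tensor5 u x) = 0" using key[OF H] x T1 by simp
  next
    fix c1 c2 :: "(nat \<Rightarrow> real) \<Rightarrow> real"
    assume h: "\<forall>x. (\<Sum>u\<in>Uset n. c1 u * tensor5 u x) + (\<Sum>u\<in>Uset n. c2 u * tensor5 (piv n u) x) = 0"
    have H: "\<forall>g. S1 n c1 g + S2 n c2 g = 0"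
    proof
      fix g show "S1 n c1 g + S2 n c2 g = 0" using h[rule_format, of "tup g"] T1 T2 by simp
    qed
    fix x
    obtain g where x: "x = tup g" using tup_surj by blast
    show "(\<Sum>u\<in>Uset n. c2 u * tensor5 (piv n u) x) = 0" using key[OF H] x T2 by simp
  qed
qed


end
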